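(* Let $G\le\mathcal{S}_n$ and $a\in\mathcal{T}_n\setminus\mathcal{S}_n$, where the kernel of $a$ has type $\lambda$, and suppose $(a,G)$ is an $\mathcal{S}_n$-pair. Then (1) $G$ is $\operatorname{rank}(a)$-homogeneous; and (2) $G$ is $\lambda$-homogeneous.
   Context: $\Omega=\{1,\ldots,n\}$, $\mathcal{T}_n$ is the monoid of all maps $\Omega\to\Omega$, $\mathcal{S}_n$ the symmetric group. $\operatorname{rank}(a)=|\Omega a|$; the kernel of $a$ is the partition of $\Omega$ into the classes of $\{(x,y):xa=ya\}$, and its type is the non-increasing list of class sizes. $(a,G)$ is an $\mathcal{S}_n$-pair if $\langle a,G\rangle\setminus G=\langle a,\mathcal{S}_n\rangle\setminus\mathcal{S}_n$. $G$ is $k$-homogeneous if transitive on $k$-subsets of $\Omega$. For a partition $\lambda$ of $n$, $G$ is $\lambda$-homogeneous if for any two ordered partitions $(A_1,A_2,\ldots)$, $(B_1,B_2,\ldots)$ of $\Omega$ with $|A_i|=|B_i|=\lambda_i$ there is $g\in G$ mapping the set of parts $\{A_1,A_2,\ldots\}$ onto $\{B_1,B_2,\ldots\}$. *)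

theory Defs
  imports Main "HOL-Library.Multiset"
begin

text \<open>The ground set Omega is modelled by a finite type 'a (so n = CARD('a)).
  T_n is the set of all maps 'a => 'a, S_n the set of bijections.\<close>

definition sym_grp :: "('a \<Rightarrow> 'a) set" where
  "sym_grp = {f. bij f}"

definition perm_subgroup :: "('a \<Rightarrow> 'a) set \<Rightarrow> bool" where
  "perm_subgroup G \<longleftrightarrow> G \<subseteq> sym_grp \<and> id \<in> G \<and>
     (\<forall>f\<in>G. \<forall>g\<in>G. f \<circ> g \<in> G) \<and> (\<forall>f\<in>G. inv f \<in> G)"

inductive_set gen_monoid :: "('a \<Rightarrow> 'a) set \<Rightarrow> ('a \<Rightarrow> 'a) set" for X where
  gen_id: "id \<in> gen_monoid X"
| gen_base: "f \<in> X \<Longrightarrow> f \<in> gen_monoid X"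
| gen_comp: "f \<in> gen_monoid X \<Longrightarrow> g \<in> gen_monoid X \<Longrightarrow> f \<circ> g \<in> gen_monoid X"

definition Sn_pair :: "('a \<Rightarrow> 'a) \<Rightarrow> ('a \<Rightarrow> 'a) set \<Rightarrow> bool" where
  "Sn_pair a G \<longleftrightarrow> gen_monoid (insert a G) - G = gen_monoid (insert a sym_grp) - sym_grp"

definition rank :: "('a \<Rightarrow> 'a) \<Rightarrow> nat" where
  "rank a = card (range a)"

definition kernel_classes :: "('a \<Rightarrow> 'a) \<Rightarrow> 'a set set" where
  "kernel_classes a = {{x. a x = a y} | y. True}"

definition kernel_type :: "('a \<Rightarrow> 'a) \<Rightarrow> nat list" where
  "kernel_type a = rev (sorted_list_of_multiset (image_mset card (mset_set (kernel_classes a))))"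

definition k_homogeneous :: "('a \<Rightarrow> 'a) set \<Rightarrow> nat \<Rightarrow> bool" where
  "k_homogeneous G k \<longleftrightarrow>
     (\<forall>A B :: 'a set. card A = k \<and> card B = k \<longrightarrow> (\<exists>g\<in>G. g ` A = B))"

definition ordered_partition :: "nat list \<Rightarrow> 'a set list \<Rightarrow> bool" where
  "ordered_partition lam As \<longleftrightarrow> length As = length lam \<and>
     (\<forall>i<length As. card (As ! i) = lam ! i) \<and>
     (\<forall>i<length As. \<forall>j<length As. i \<noteq> j \<longrightarrow> As ! i \<inter> As ! j = {}) \<and>
     \<Union> (set As) = UNIV"

definition lam_homogeneous :: "('a \<Rightarrow> 'a) set \<Rightarrow> nat list \<Rightarrow> bool" where
  "lam_homogeneous G lam \<longleftrightarrow>
     (\<forall>As Bs :: 'a set list. ordered_partition lam As \<and> ordered_partition lam Bs \<longrightarrow>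
        (\<exists>g\<in>G. (\<lambda>A. g ` A) ` set As = set Bs))"

end

theory Submission
  imports Defs
begin

lemma decomp_left:
  assumes "f \<in> gen_monoid (insert a G)" "perm_subgroup G"
  shows "f \<in> G \<or> (\<exists>g\<in>G. \<exists>v\<in>gen_monoid (insert a G). f = g \<circ> a \<circ> v)"
  using assms(1)
proof (induction rule: gen_monoid.induct)
  case gen_id then show ?case using assms(2) unfolding perm_subgroup_def by blast
next
  case (gen_base f)
  show ?case
  proof (cases "f = a")
    case True
    have "id \<in> G" using assms(2) unfolding perm_subgroup_def by blast
    moreover have "id \<in> gen_monoid (insert a G)" by (rule gen_monoid.gen_id)
    ultimately show ?thesis using True by (intro disjI2 bexI[of _ id]) auto
  next
    case False then show ?thesis using gen_base by simp
  qed
next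
  case (gen_comp f h)
  from gen_comp.IH(1) show ?case
  proof
    assume f: "f \<in> G"
    from gen_comp.IH(2) show ?case
    proof
      assume "h \<in> G" then show ?case using f assms(2) unfolding perm_subgroup_def by blast
    next
      assume "\<exists>g\<in>G. \<exists>v\<in>gen_monoid (insert a G). h = g \<circ> a \<circ> v"
      then obtain g v where "g \<in> G" "v \<in> gen_monoid (insert a G)" "h = g \<circ> a \<circ> v" by blast
      moreover have "f \<circ> g \<in> G" using f \<open>g \<in> G\<close> assms(2) by (simp add: perm_subgroup_def)
      ultimately show ?case by (metis comp_assoc)
    qed
  next
    assume "\<exists>g\<in>G. \<exists>v\<in>gen_monoid (insert a G). f = g \<circ> a \<circ> v"
    then obtain g v where "g \<in> G" "v \<in> gen_monoid (insert a G)" "f = g \<circ> a \<circ> v" by blast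
    moreover have "v \<circ> h \<in> gen_monoid (insert a G)"
      using gen_comp.hyps(2) \<open>v \<in> _\<close> gen_monoid.gen_comp by blast
    ultimately show ?case by (metis comp_assoc)
  qed
qed

lemma decomp_right:
  assumes "f \<in> gen_monoid (insert a G)" "perm_subgroup G"
  shows "f \<in> G \<or> (\<exists>g\<in>G. \<exists>v\<in>gen_monoid (insert a G). f = v \<circ> a \<circ> g)"
  using assms(1)
proof (induction rule: gen_monoid.induct)
  case gen_id then show ?case using assms(2) unfolding perm_subgroup_def by blast
next
  case (gen_base f)
  show ?case
  proof (cases "f = a")
    case True
    have "id \<in> G" using assms(2) unfolding perm_subgroup_def by blast
    moreover have "id \<in> gen_monoid (insert a G)" by (rule gen_monoid.gen_id)
    ultimately show ?thesis using True by (intro disjI2 bexI[of _ id]) auto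
  next
    case False then show ?thesis using gen_base by simp
  qed
next
  case (gen_comp f h)
  from gen_comp.IH(2) show ?case
  proof
    assume f: "h \<in> G"
    from gen_comp.IH(1) show ?case
    proof
      assume "f \<in> G" then show ?case using f assms(2) unfolding perm_subgroup_def by blast
    next
      assume "\<exists>g\<in>G. \<exists>v\<in>gen_monoid (insert a G). f = v \<circ> a \<circ> g"
      then obtain g v where "g \<in> G" "v \<in> gen_monoid (insert a G)" "f = v \<circ> a \<circ> g" by blast
      moreover have "g \<circ> h \<in> G" using f \<open>g \<in> G\<close> assms(2) by (simp add: perm_subgroup_def)
      ultimately show ?case by (metis comp_assoc)
    qed
  next
    assume "\<exists>g\<in>G. \<exists>v\<in>gen_monoid (insert a G). h = v \<circ> a \<circ> g"
    then obtain g v where "g \<in> G" "v \<in> gen_monoid (insert a G)" "h = v \<circ> a \<circ> g" by blast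
    moreover have "f \<circ> v \<in> gen_monoid (insert a G)"
      using gen_comp.hyps(1) \<open>v \<in> _\<close> gen_monoid.gen_comp by blast
    ultimately show ?case by (metis comp_assoc)
  qed
qed

lemma nonbij_in:
  assumes "perm_subgroup G" "a \<notin> sym_grp" "Sn_pair a G"
    and "w \<in> gen_monoid (insert a sym_grp)" "\<not> bij w"
  shows "w \<in> gen_monoid (insert a G)" "w \<notin> G"
proof -
  have "w \<in> gen_monoid (insert a sym_grp) - sym_grp" using assms(4,5) by (simp add: sym_grp_def)
  then have "w \<in> gen_monoid (insert a G) - G" using assms(3) by (simp add: Sn_pair_def)
  then show "w \<in> gen_monoid (insert a G)" "w \<notin> G" by auto
qed

lemma glue:
  fixes As Bs :: "'a::finite set list"
  assumes A: "ordered_partition lam As" and B: "ordered_partition lam Bs"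
  shows "\<exists>s. bij s \<and> (\<forall>i<length As. s ` (As!i) = Bs!i)"
proof -
  define n where "n = length As"
  have lenB: "length Bs = n" using A B by (simp add: ordered_partition_def n_def)
  have "\<forall>i. \<exists>h. i < n \<longrightarrow> bij_betw h (As!i) (Bs!i)"
  proof
    fix i show "\<exists>h. i < n \<longrightarrow> bij_betw h (As!i) (Bs!i)"
    proof (cases "i < n")
      case True
      then have "card (As!i) = card (Bs!i)" using A B lenB
        by (simp add: ordered_partition_def n_def)
      then show ?thesis using finite_same_card_bij[of "As!i" "Bs!i"] by auto
    qed auto
  qed
  then obtain f where f: "\<And>i. i < n \<Longrightarrow> bij_betw (f i) (As!i) (Bs!i)" by metis
  have disjA: "\<And>i j. i < n \<Longrightarrow> j < n \<Longrightarrow> i \<noteq> j \<Longrightarrow> As!i \<inter> As!j = {}"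
    using A by (simp add: ordered_partition_def n_def)
  have disjB: "\<And>i j. i < n \<Longrightarrow> j < n \<Longrightarrow> i \<noteq> j \<Longrightarrow> Bs!i \<inter> Bs!j = {}"
    using B lenB by (simp add: ordered_partition_def)
  have ex: "\<And>x. \<exists>i<n. x \<in> As!i"
  proof -
    fix x
    have "x \<in> \<Union>(set As)" using A by (simp add: ordered_partition_def)
    then show "\<exists>i<n. x \<in> As!i" by (auto simp: in_set_conv_nth n_def)
  qed
  define idx where "idx x = (THE i. i < n \<and> x \<in> As!i)" for x
  have idx: "\<And>x i. i < n \<Longrightarrow> x \<in> As!i \<Longrightarrow> idx x = i"
  proof -
    fix x i assume "i < n" "x \<in> As!i"
    then show "idx x = i" unfolding idx_def
      by (rule_tac the_equality) (auto dest: disjA)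
  qed
  define s where "s x = f (idx x) x" for x
  have sx: "\<And>x i. i < n \<Longrightarrow> x \<in> As!i \<Longrightarrow> s x = f i x" using idx by (simp add: s_def)
  have img: "\<And>i. i < n \<Longrightarrow> s ` (As!i) = Bs!i"
  proof -
    fix i assume i: "i < n"
    have "s ` (As!i) = f i ` (As!i)" using sx[OF i] by (intro image_cong) auto
    then show "s ` (As!i) = Bs!i" using f[OF i] by (simp add: bij_betw_def)
  qed
  have "inj s"
  proof (rule injI)
    fix x y assume eq: "s x = s y"
    obtain i where i: "i < n" "x \<in> As!i" using ex by blast
    obtain j where j: "j < n" "y \<in> As!j" using ex by blast
    have "s x \<in> Bs!i" using img i by blast
    moreover have "s y \<in> Bs!j" using img j by blast
    ultimately have "i = j" using disjB[OF i(1) j(1)] eq by (metis disjoint_iff)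
    then have "f i x = f i y" using eq sx i j by simp
    then show "x = y" using f[OF i(1)] i j \<open>i = j\<close> by (auto simp: bij_betw_def inj_on_def)
  qed
  then have "bij s" by (simp add: bij_def finite_UNIV_inj_surj)
  then show ?thesis using img n_def by blast
qed

lemma perm_to_set:
  fixes X Y :: "'a::finite set"
  assumes "card X = card Y"
  shows "\<exists>s. bij s \<and> s ` X = Y"
proof -
  have cc: "card (- X) = card (- Y)" using assms by (simp add: Compl_eq_Diff_UNIV card_Diff_subset)
  have A: "ordered_partition [card X, card (-X)] [X, -X]"
    unfolding ordered_partition_def by (auto simp: less_Suc_eq nth_Cons')
  have B: "ordered_partition [card X, card (-X)] [Y, -Y]"
    unfolding ordered_partition_def using assms cc by (auto simp: less_Suc_eq nth_Cons')
  obtain s where "bij s" "\<forall>i<2. s ` ([X, -X]!i) = [Y, -Y]!i"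
    using glue[OF A B] by auto
  then show ?thesis by (metis nth_Cons_0 zero_less_numeral)
qed

lemma part1_aux:
  fixes a :: "'a::finite \<Rightarrow> 'a"
  assumes G: "perm_subgroup G" and a: "a \<notin> sym_grp" and P: "Sn_pair a G" and s: "bij s"
  shows "\<exists>g\<in>G. g ` range a = s ` range a"
proof -
  have w1: "s \<circ> a \<in> gen_monoid (insert a sym_grp)"
    using s by (intro gen_monoid.gen_comp gen_monoid.gen_base) (auto simp: sym_grp_def)
  have w2: "\<not> bij (s \<circ> a)"
  proof
    assume "bij (s \<circ> a)"
    then have "bij (inv s \<circ> (s \<circ> a))" using s bij_comp bij_imp_bij_inv by blast
    moreover have "inv s \<circ> (s \<circ> a) = a" using s by (metis comp_assoc inv_o_cancel bij_is_inj id_comp)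
    ultimately show False using a by (simp add: sym_grp_def)
  qed
  note nb = nonbij_in[OF G a P w1 w2]
  from decomp_left[OF nb(1) G] nb(2) obtain g v where
    g: "g \<in> G" and eq: "s \<circ> a = g \<circ> a \<circ> v" by blast
  have bg: "bij g" using g G by (auto simp: perm_subgroup_def sym_grp_def)
  have "s ` range a = range (s \<circ> a)" by (simp add: image_comp)
  also have "\<dots> \<subseteq> g ` range a" unfolding eq by auto
  finally have sub: "s ` range a \<subseteq> g ` range a" .
  have "card (s ` range a) = card (g ` range a)"
    using s bg by (metis bij_is_inj card_image inj_on_subset subset_UNIV)
  moreover have fin: "finite (g ` range a)" by (rule finite)
  ultimately have "s ` range a = g ` range a" using card_subset_eq[OF fin sub] by simp
  then show ?thesis using g by auto
qed

lemma imgK: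
  assumes "bij p"
  shows "(image (inv p)) ` kernel_classes a = {{z. a (p z) = a (p y)} | y. True}"
proof -
  have e: "\<And>y. inv p ` {x. a x = a y} = {z. a (p z) = a y}"
    using assms by (simp add: bij_image_Collect_eq bij_imp_bij_inv inv_inv_eq)
  have 1: "(image (inv p)) ` kernel_classes a = {{z. a (p z) = a y} | y. True}"
  proof -
    have "(image (inv p)) ` {{x. a x = a y} | y. True} = {inv p ` {x. a x = a y} | y. True}" by blast
    then show ?thesis unfolding kernel_classes_def e .
  qed
  have h: "\<And>y. p (inv p y) = y" using assms by (simp add: bij_is_surj surj_f_inv_f)
  have 2: "{{z. a (p z) = a y} | y. True} = {{z. a (p z) = a (p y)} | y. True}"
  proof (intro set_eqI iffI)
    fix C assume "C \<in> {{z. a (p z) = a y} | y. True}"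
    then obtain y where "C = {z. a (p z) = a y}" by blast
    then have "C = {z. a (p z) = a (p (inv p y))}" by (simp add: h)
    then show "C \<in> {{z. a (p z) = a (p y)} | y. True}" by blast
  next
    fix C assume "C \<in> {{z. a (p z) = a (p y)} | y. True}"
    then show "C \<in> {{z. a (p z) = a y} | y. True}" by blast
  qed
  show ?thesis using 1 2 by simp
qed

lemma part2_aux:
  fixes a :: "'a::finite \<Rightarrow> 'a"
  assumes G: "perm_subgroup G" and a: "a \<notin> sym_grp" and P: "Sn_pair a G" and s: "bij s"
  shows "\<exists>g\<in>G. (image (inv g)) ` kernel_classes a = (image s) ` kernel_classes a"
proof -
  have bis: "bij (inv s)" using s bij_imp_bij_inv by blast
  have w1: "a \<circ> inv s \<in> gen_monoid (insert a sym_grp)"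
    using bis by (intro gen_monoid.gen_comp gen_monoid.gen_base) (auto simp: sym_grp_def)
  have w2: "\<not> bij (a \<circ> inv s)"
  proof
    assume "bij (a \<circ> inv s)"
    then have "bij ((a \<circ> inv s) \<circ> s)" using s bij_comp by blast
    moreover have "(a \<circ> inv s) \<circ> s = a" using s by (metis comp_assoc inv_o_cancel bij_is_inj comp_id)
    ultimately show False using a by (simp add: sym_grp_def)
  qed
  note nb = nonbij_in[OF G a P w1 w2]
  from decomp_right[OF nb(1) G] nb(2) obtain g v where
    g: "g \<in> G" and eq: "a \<circ> inv s = v \<circ> a \<circ> g" by blast
  have bg: "bij g" using g G by (auto simp: perm_subgroup_def sym_grp_def)
  have fwd: "\<And>x y. a (g x) = a (g y) \<Longrightarrow> a (inv s x) = a (inv s y)"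
    by (metis comp_apply eq)
  define \<phi> where "\<phi> z = a (inv s (SOME x. a (g x) = z))" for z
  have phi: "\<And>x. \<phi> (a (g x)) = a (inv s x)"
  proof -
    fix x
    have "a (g (SOME x'. a (g x') = a (g x))) = a (g x)" by (rule someI) auto
    then show "\<phi> (a (g x)) = a (inv s x)" unfolding \<phi>_def by (rule fwd)
  qed
  have ra: "range a = range (\<lambda>x. a (g x))"
  proof -
    have "range (\<lambda>x. a (g x)) = a ` range g" by (simp add: image_image)
    then show ?thesis using bij_is_surj[OF bg] by simp
  qed
  have "\<phi> ` range a = range a"
  proof
    show "\<phi> ` range a \<subseteq> range a" unfolding \<phi>_def by auto
    show "range a \<subseteq> \<phi> ` range a"
    proof
      fix z assume "z \<in> range a"
      then obtain y where "z = a y" by auto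
      then have "z = \<phi> (a (g (s y)))" using phi s by (simp add: bij_is_inj)
      then show "z \<in> \<phi> ` range a" by auto
    qed
  qed
  then have injphi: "inj_on \<phi> (range a)" using inj_on_iff_eq_card[of "range a" \<phi>] by simp
  have equiv: "\<And>x y. a (inv s x) = a (inv s y) \<longleftrightarrow> a (g x) = a (g y)"
  proof
    fix x y assume "a (inv s x) = a (inv s y)"
    then have "\<phi> (a (g x)) = \<phi> (a (g y))" by (simp add: phi)
    then show "a (g x) = a (g y)" using injphi by (auto dest: inj_onD)
  qed (rule fwd)
  have "(image s) ` kernel_classes a = (image (inv (inv s))) ` kernel_classes a"
    using s by (simp add: inv_inv_eq)
  also have "\<dots> = {{z. a (inv s z) = a (inv s y)} | y. True}" by (rule imgK[OF bis])
  also have "\<dots> = {{z. a (g z) = a (g y)} | y. True}" by (simp add: equiv)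
  also have "\<dots> = (image (inv g)) ` kernel_classes a" by (rule imgK[OF bg, symmetric])
  finally have "(image s) ` kernel_classes a = (image (inv g)) ` kernel_classes a" .
  then show ?thesis using g by auto
qed

lemma map_card_sort: "map f (sort_key f xs) = sort (map f xs)"
  by (rule properties_for_sort[symmetric]) (simp_all add: mset_map)

lemma kernel_list:
  fixes a :: "'a::finite \<Rightarrow> 'a"
  shows "\<exists>Ks. ordered_partition (kernel_type a) Ks \<and> set Ks = kernel_classes a"
proof -
  obtain xs where xs: "set xs = kernel_classes a" "distinct xs"
    using finite_distinct_list[of "kernel_classes a"] by auto
  define Ks where "Ks = rev (sort_key card xs)"
  have m: "mset_set (kernel_classes a) = mset xs" using xs by (metis mset_set_set)
  have m2: "image_mset card (mset xs) = mset (map card xs)" by simp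
  have kt: "kernel_type a = map card Ks"
    unfolding kernel_type_def Ks_def m m2 sorted_list_of_multiset_mset
    by (simp add: rev_map[symmetric] map_card_sort)
  have dK: "distinct Ks" using xs by (simp add: Ks_def)
  have sK: "set Ks = kernel_classes a" using xs by (simp add: Ks_def)
  have "ordered_partition (kernel_type a) Ks"
    unfolding ordered_partition_def kt
  proof (intro conjI allI impI)
    fix i j assume ij: "i < length Ks" "j < length Ks" "i \<noteq> j"
    then have ne: "Ks!i \<noteq> Ks!j" using dK by (simp add: nth_eq_iff_index_eq)
    have "Ks!i \<in> kernel_classes a" "Ks!j \<in> kernel_classes a" using ij sK nth_mem by blast+
    then show "Ks!i \<inter> Ks!j = {}" using ne unfolding kernel_classes_def by auto
  next
    show "\<Union> (set Ks) = UNIV" using sK unfolding kernel_classes_def by auto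
  qed auto
  then show ?thesis using sK by blast
qed

theorem lemma5p1:
  fixes G :: "('a::finite \<Rightarrow> 'a) set" and a :: "'a \<Rightarrow> 'a"
  assumes "perm_subgroup G"
    and "a \<notin> sym_grp"
    and "Sn_pair a G"
  shows "k_homogeneous G (rank a) \<and> lam_homogeneous G (kernel_type a)"
proof
  have Gb: "\<And>g. g \<in> G \<Longrightarrow> bij g" using assms(1) by (auto simp: perm_subgroup_def sym_grp_def)
  have Gc: "\<And>f g. f \<in> G \<Longrightarrow> g \<in> G \<Longrightarrow> f \<circ> g \<in> G" using assms(1) by (auto simp: perm_subgroup_def)
  have Gi: "\<And>g. g \<in> G \<Longrightarrow> inv g \<in> G" using assms(1) by (auto simp: perm_subgroup_def)
  show "k_homogeneous G (rank a)"
    unfolding k_homogeneous_def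
  proof (intro allI impI)
    fix A B :: "'a set" assume c: "card A = rank a \<and> card B = rank a"
    obtain s1 where s1: "bij s1" "s1 ` range a = A"
      using perm_to_set[of "range a" A] c by (auto simp: rank_def)
    obtain s2 where s2: "bij s2" "s2 ` range a = B"
      using perm_to_set[of "range a" B] c by (auto simp: rank_def)
    obtain g1 where g1: "g1 \<in> G" "g1 ` range a = A" using part1_aux[OF assms s1(1)] s1 by auto
    obtain g2 where g2: "g2 \<in> G" "g2 ` range a = B" using part1_aux[OF assms s2(1)] s2 by auto
    have "(g2 \<circ> inv g1) ` A = g2 ` (inv g1 ` g1 ` range a)" using g1 by (simp add: image_comp)
    also have "inv g1 ` g1 ` range a = range a" using Gb[OF g1(1)] by (simp add: bij_is_inj)
    finally have "(g2 \<circ> inv g1) ` A = B" using g2 by simp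
    then show "\<exists>g\<in>G. g ` A = B" using Gc[OF g2(1) Gi[OF g1(1)]] by blast
  qed
  obtain Ks where Ks: "ordered_partition (kernel_type a) Ks" "set Ks = kernel_classes a"
    using kernel_list by blast
  have key: "\<exists>g\<in>G. (image (inv g)) ` kernel_classes a = set As"
    if As: "ordered_partition (kernel_type a) As" for As
  proof -
    obtain s where s: "bij s" "\<forall>i<length Ks. s ` (Ks!i) = As!i" using glue[OF Ks(1) As] by blast
    have len: "length Ks = length As" using Ks(1) As by (simp add: ordered_partition_def)
    have "(image s) ` set Ks = set As"
    proof -
      have "(image s) ` set Ks = {s ` (Ks!i) | i. i < length Ks}" by (auto simp: set_conv_nth)
      also have "\<dots> = {As!i | i. i < length As}" using s(2) len by auto
      also have "\<dots> = set As" by (auto simp: set_conv_nth)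
      finally show ?thesis .
    qed
    then have "(image s) ` kernel_classes a = set As" using Ks(2) by simp
    moreover obtain g where "g \<in> G" "(image (inv g)) ` kernel_classes a = (image s) ` kernel_classes a"
      using part2_aux[OF assms s(1)] by blast
    ultimately show ?thesis by auto
  qed
  show "lam_homogeneous G (kernel_type a)"
    unfolding lam_homogeneous_def
  proof (intro allI impI)
    fix As Bs :: "'a set list"
    assume "ordered_partition (kernel_type a) As \<and> ordered_partition (kernel_type a) Bs"
    then obtain g1 g2 where g1: "g1 \<in> G" "(image (inv g1)) ` kernel_classes a = set As"
      and g2: "g2 \<in> G" "(image (inv g2)) ` kernel_classes a = set Bs" using key by meson
    have e: "inv g2 \<circ> g1 \<circ> inv g1 = inv g2"
    proof -
      have "g1 \<circ> inv g1 = id" using Gb[OF g1(1)] by (intro ext) (simp add: surj_f_inv_f bij_is_surj)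
      then show ?thesis by (simp add: comp_assoc)
    qed
    have "(\<lambda>A. (inv g2 \<circ> g1) ` A) ` set As = (\<lambda>A. (inv g2 \<circ> g1) ` A) ` (image (inv g1)) ` kernel_classes a"
      using g1 by simp
    also have "\<dots> = (\<lambda>C. (inv g2 \<circ> g1 \<circ> inv g1) ` C) ` kernel_classes a"
      by (simp add: image_comp)
    also have "\<dots> = set Bs" using e g2 by simp
    finally show "\<exists>g\<in>G. (\<lambda>A. g ` A) ` set As = set Bs"
      using Gc[OF Gi[OF g2(1)] g1(1)] by blast
  qed
qed

end
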